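(* Let $r\ge2$ and $p\ge2$ be integers, $\mathcal{A}$ the adjacency tensor of an $r$-uniform (possibly weighted) hypergraph on $n$ vertices, and $f(\mathbf{x})=(r-1)!\,\mathcal{A}\mathbf{x}^r/\|\mathbf{x}\|_p^r$. Suppose the sequence $\{\mathbf{x}_k\}$ is generated by the CSRH iteration (described in the context) from an arbitrary unit vector $\mathbf{x}_0\in\mathbb{S}^{n-1}$, that it is infinite, and that $\nabla f(\mathbf{x}_k)\neq0$ for all $k$. Then $$\lim_{k\to\infty}\|\nabla f(\mathbf{x}_k)\|=0.$$
   Context: $\mathbb{S}^{n-1}=\{\mathbf{x}\in\mathbb{R}^n:\mathbf{x}^\top\mathbf{x}=1\}$. Adjacency tensor: for a weighted $r$-uniform hypergraph with vertex set $\{1,\dots,n\}$ and edge weights $s(e)>0$, $\mathcal{A}=(a_{i_1\cdots i_r})$ is symmetric with $a_{i_1\cdots i_r}=s(e)/(r-1)!$ if $\{i_1,\dots,i_r\}=e$ is an edge and $0$ otherwise; $\mathcal{A}\mathbf{x}^r=\sum a_{i_1\cdots i_r}x_{i_1}\cdots x_{i_r}$, $(\mathcal{A}\mathbf{x}^{r-1})_i=\sum a_{ii_2\cdots i_r}x_{i_2}\cdots x_{i_r}$, $\|\mathbf{x}\|_p=(\sum|x_i|^p)^{1/p}$, $\|\cdot\|$ Euclidean. $\nabla f(\mathbf{x})=\frac{r!}{\|\mathbf{x}\|_p^r}(\mathcal{A}\mathbf{x}^{r-1}-\mathcal{A}\mathbf{x}^r\|\mathbf{x}\|_p^{-p}\mathbf{x}^{\langle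 p-1\rangle})$ with $(\mathbf{x}^{\langle p-1\rangle})_i=|x_i|^{p-1}\mathrm{sgn}(x_i)$. CSRH iteration: fix $0<c_1<c_2<1$, $\tfrac14<\tau<1$, $\epsilon>0$, a unit vector $\mathbf{x}_0$, and $\mathbf{p}_0=\nabla f(\mathbf{x}_0)$. At step $k$, with $\mathbf{x}_{k+1}(\alpha)=\frac{[(2-\alpha\mathbf{x}_k^\top\mathbf{p}_k)^2-\|\alpha\mathbf{p}_k\|^2]\mathbf{x}_k+4\alpha\mathbf{p}_k}{4+\|\alpha\mathbf{p}_k\|^2-(\alpha\mathbf{x}_k^\top\mathbf{p}_k)^2}$, choose $\alpha_k>0$ with $f(\mathbf{x}_{k+1}(\alpha_k))\ge f(\mathbf{x}_k)+c_1\alpha_k\nabla f(\mathbf{x}_k)^\top\mathbf{p}_k$ and $\nabla f(\mathbf{x}_{k+1}(\alpha_k))^\top\mathbf{p}_k\le c_2\nabla f(\mathbf{x}_k)^\top\mathbf{p}_k$; set $\mathbf{x}_{k+1}=\mathbf{x}_{k+1}(\alpha_k)$, $\mathbf{d}_k=\mathbf{x}_{k+1}-\mathbf{x}_k$, $\mathbf{y}_k=\nabla f(\mathbf{x}_{k+1})-\nabla f(\mathbf{x}_k)$, $\beta_k=\max(0,\tilde\beta_k)$ where $\tilde\beta_k=(\tau\mathbf{d}_k\|\mathbf{y}_k\|^2/(\mathbf{d}_k^\top\mathbf{y}_k)-\mathbf{y}_k)^\top\nabla f(\mathbf{x}_{k+1})/(\mathbf{d}_k^\top\mathbf{y}_k)$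 if $|\mathbf{d}_k^\top\mathbf{y}_k|\ge\epsilon\|\mathbf{d}_k\|\|\mathbf{y}_k\|$ and $\tilde\beta_k=0$ otherwise, and $\mathbf{p}_{k+1}=\nabla f(\mathbf{x}_{k+1})+\beta_k\mathbf{d}_k$. *)

theory Defs
  imports "HOL-Analysis.Analysis"
begin

text \<open>Vertices of the hypergraph are the elements of the finite type 'n (so n = CARD('n)),
  vectors of R^n are elements of real ^ 'n. A weighted r-uniform hypergraph is given by an
  edge set E (each edge an r-element set of vertices) and weights s e > 0 on edges.\<close>

definition tuples :: "nat \<Rightarrow> ('n::finite) list set" where
  "tuples m = {is. length is = m}"

definition adj_entry :: "('n::finite) set set \<Rightarrow> ('n set \<Rightarrow> real) \<Rightarrow> nat \<Rightarrow> 'n list \<Rightarrow> real" where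
  "adj_entry E s r is = (if set is \<in> E then s (set is) / fact (r - 1) else 0)"

definition tensor_form :: "('n::finite) set set \<Rightarrow> ('n set \<Rightarrow> real) \<Rightarrow> nat \<Rightarrow> real ^ 'n \<Rightarrow> real" where
  "tensor_form E s r x =
     (\<Sum>is\<in>tuples r. adj_entry E s r is * (\<Prod>j<r. x $ (is ! j)))"

definition tensor_vec :: "('n::finite) set set \<Rightarrow> ('n set \<Rightarrow> real) \<Rightarrow> nat \<Rightarrow> real ^ 'n \<Rightarrow> real ^ 'n" where
  "tensor_vec E s r x = (\<chi> i.
     (\<Sum>is\<in>tuples (r - 1). adj_entry E s r (i # is) * (\<Prod>j<r - 1. x $ (is ! j))))"

definition pnorm :: "nat \<Rightarrow> real ^ ('n::finite) \<Rightarrow> real" where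
  "pnorm p x = (\<Sum>i\<in>UNIV. \<bar>x $ i\<bar> ^ p) powr (1 / real p)"

definition fobj :: "('n::finite) set set \<Rightarrow> ('n set \<Rightarrow> real) \<Rightarrow> nat \<Rightarrow> nat \<Rightarrow> real ^ 'n \<Rightarrow> real" where
  "fobj E s r p x = fact (r - 1) * tensor_form E s r x / pnorm p x ^ r"

definition gradf :: "('n::finite) set set \<Rightarrow> ('n set \<Rightarrow> real) \<Rightarrow> nat \<Rightarrow> nat \<Rightarrow> real ^ 'n \<Rightarrow> real ^ 'n" where
  "gradf E s r p x = (fact r / pnorm p x ^ r) *\<^sub>R
     (tensor_vec E s r x - (tensor_form E s r x * pnorm p x powr (- real p)) *\<^sub>R
        (\<chi> i. \<bar>x $ i\<bar> ^ (p - 1) * sgn (x $ i)))"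

definition csrh_step :: "real ^ ('n::finite) \<Rightarrow> real ^ 'n \<Rightarrow> real \<Rightarrow> real ^ 'n" where
  "csrh_step x d \<alpha> =
     (1 / (4 + (norm (\<alpha> *\<^sub>R d))\<^sup>2 - (\<alpha> * (x \<bullet> d))\<^sup>2)) *\<^sub>R
       (((2 - \<alpha> * (x \<bullet> d))\<^sup>2 - (norm (\<alpha> *\<^sub>R d))\<^sup>2) *\<^sub>R x + (4 * \<alpha>) *\<^sub>R d)"

text \<open>beta_k = max 0 tilde-beta_k, with d = d_k, y = y_k, g = grad f(x_{k+1}).\<close>
definition csrh_beta :: "real \<Rightarrow> real \<Rightarrow> real ^ ('n::finite) \<Rightarrow> real ^ 'n \<Rightarrow> real ^ 'n \<Rightarrow> real" where
  "csrh_beta \<tau> \<epsilon> d y g = max 0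
     (if \<bar>d \<bullet> y\<bar> \<ge> \<epsilon> * norm d * norm y
      then (((\<tau> * (norm y)\<^sup>2 / (d \<bullet> y)) *\<^sub>R d - y) \<bullet> g) / (d \<bullet> y)
      else 0)"

definition csrh_run :: "('n::finite) set set \<Rightarrow> ('n set \<Rightarrow> real) \<Rightarrow> nat \<Rightarrow> nat \<Rightarrow>
    real \<Rightarrow> real \<Rightarrow> real \<Rightarrow> real \<Rightarrow>
    (nat \<Rightarrow> real ^ 'n) \<Rightarrow> (nat \<Rightarrow> real) \<Rightarrow> (nat \<Rightarrow> real ^ 'n) \<Rightarrow> bool" where
  "csrh_run E s r p c1 c2 \<tau> \<epsilon> x \<alpha> pd \<longleftrightarrow>
     norm (x 0) = 1 \<and>
     pd 0 = gradf E s r p (x 0) \<and>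
     (\<forall>k. \<alpha> k > 0 \<and>
        fobj E s r p (csrh_step (x k) (pd k) (\<alpha> k))
          \<ge> fobj E s r p (x k) + c1 * \<alpha> k * (gradf E s r p (x k) \<bullet> pd k) \<and>
        gradf E s r p (csrh_step (x k) (pd k) (\<alpha> k)) \<bullet> pd k
          \<le> c2 * (gradf E s r p (x k) \<bullet> pd k) \<and>
        x (Suc k) = csrh_step (x k) (pd k) (\<alpha> k) \<and>
        pd (Suc k) = gradf E s r p (x (Suc k)) +
          csrh_beta \<tau> \<epsilon> (x (Suc k) - x k)
             (gradf E s r p (x (Suc k)) - gradf E s r p (x k))
             (gradf E s r p (x (Suc k))) *\<^sub>R (x (Suc k) - x k))"

end

theory Submission
  imports Defs
begin

lemma step_props:
  fixes x d :: "real ^ 'n::finite"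
  assumes nx: "norm x = 1"
  shows "norm (csrh_step x d a) = 1" "norm (csrh_step x d a - x) \<le> \<bar>a\<bar> * norm d"
proof -
  define c where "c = x \<bullet> d"
  define n where "n = d \<bullet> d"
  have dx: "d \<bullet> x = c" by (simp add: c_def inner_commute)
  have xx: "x \<bullet> x = 1" using nx by (simp add: dot_square_norm)
  have nd: "(norm (a *\<^sub>R d))\<^sup>2 = a^2 * n" by (simp add: n_def power_mult_distrib dot_square_norm)
  have cs: "c^2 \<le> n"
  proof -
    have "\<bar>c\<bar> \<le> norm x * norm d" unfolding c_def by (rule Cauchy_Schwarz_ineq2)
    hence "c^2 \<le> (norm d)^2" using nx by (metis abs_ge_zero mult_1 power_mono power2_abs)
    thus ?thesis by (simp add: n_def power2_norm_eq_inner)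
  qed
  define D where "D = 4 + a^2 * n - (a*c)^2"
  define u where "u = (2 - a*c)^2 - a^2*n"
  have D4: "D \<ge> 4" unfolding D_def using cs
    by (metis le_add_same_cancel1 mult_left_mono power_mult_distrib zero_le_power2 diff_ge_0_iff_ge add_diff_eq)
  have st: "csrh_step x d a = (1/D) *\<^sub>R (u *\<^sub>R x + (4*a) *\<^sub>R d)"
    unfolding csrh_step_def D_def u_def nd c_def by simp
  have ip: "(u *\<^sub>R x + (4*a) *\<^sub>R d) \<bullet> (u *\<^sub>R x + (4*a) *\<^sub>R d) = u^2 + 8*a*u*c + 16*a^2*n"
    by (simp add: inner_add_left inner_add_right xx dx c_def[symmetric] n_def[symmetric] power2_eq_square algebra_simps)
  have id1: "u^2 + 8*a*u*c + 16*a^2*n = D^2"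
    unfolding u_def D_def by (simp add: power2_eq_square algebra_simps)
  have "(norm (csrh_step x d a))^2 = 1"
    unfolding power2_norm_eq_inner st using D4 ip id1 by (simp add: power2_eq_square)
  thus n1: "norm (csrh_step x d a) = 1" by (smt (verit) norm_ge_zero power2_eq_1_iff)
  have ix: "csrh_step x d a \<bullet> x = (u + 4*a*c) / D"
    unfolding st by (simp add: inner_add_left xx dx)
  have ss: "csrh_step x d a \<bullet> csrh_step x d a = 1" using n1 by (simp add: dot_square_norm)
  have xs: "x \<bullet> csrh_step x d a = (u + 4*a*c) / D" using ix by (simp add: inner_commute)
  have "(norm (csrh_step x d a - x))^2 = (csrh_step x d a - x) \<bullet> (csrh_step x d a - x)"
    by (simp add: power2_norm_eq_inner)
  also have "\<dots> = 2 - 2 * (x \<bullet> csrh_step x d a)"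
    by (simp add: inner_diff_left inner_diff_right ss xx inner_commute)
  also have "\<dots> = 2 - 2 * ((u + 4*a*c) / D)" by (simp only: xs)
  also have "\<dots> = 2 * (D - (u + 4*a*c)) / D"
  proof -
    have "D \<noteq> 0" using D4 by simp
    thus ?thesis by (simp add: field_simps)
  qed
  also have "D - (u + 4*a*c) = 2 * (a^2*n - (a*c)^2)"
    unfolding u_def D_def by (simp add: power2_eq_square algebra_simps)
  also have "2 * (2 * (a^2*n - (a*c)^2)) / D = 4 * (a^2*n - (a*c)^2) / D" by simp
  also have "\<dots> \<le> a^2 * n" 
  proof -
    have "a^2*n - (a*c)^2 \<ge> 0" using D4 D_def by simp
    hence "4 * (a^2*n - (a*c)^2) / D \<le> 4 * (a^2*n - (a*c)^2) / 4" using D4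
      by (intro divide_left_mono) auto
    also have "\<dots> \<le> a^2*n" by (simp add: power_mult_distrib)
    finally show ?thesis .
  qed
  also have "\<dots> = (\<bar>a\<bar> * norm d)^2" by (simp add: n_def power_mult_distrib power2_norm_eq_inner)
  finally show "norm (csrh_step x d a - x) \<le> \<bar>a\<bar> * norm d"
    by (rule power2_le_imp_le) simp
qed

lemma fin_tuples: "finite (tuples m :: ('n::finite) list set)"
proof -
  have "tuples m = {xs :: 'n list. set xs \<subseteq> UNIV \<and> length xs = m}" by (simp add: tuples_def)
  thus ?thesis using finite_lists_length_eq[of "UNIV :: 'n set" m] by simp
qed

lemma cont_tf: "continuous_on S (tensor_form E s r)"
  unfolding tensor_form_def by (intro continuous_intros)

lemma cont_tv: "continuous_on S (tensor_vec E s r)"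
  unfolding tensor_vec_def by (intro continuous_intros)

lemma pnorm_pos: assumes "x \<noteq> 0" "p \<ge> 1" shows "pnorm p x > 0"
proof -
  obtain i where "x $ i \<noteq> 0" using assms(1) by (metis vec_eq_iff zero_index)
  hence "(\<Sum>i\<in>UNIV. \<bar>x $ i\<bar> ^ p) > 0"
    by (intro sum_pos2[where i=i]) auto
  thus ?thesis unfolding pnorm_def by simp
qed

lemma cont_pnorm: "continuous_on (-{0}) (pnorm p :: real^'n::finite \<Rightarrow> real)" if "p \<ge> 1"
proof -
  have "continuous_on (-{0}) (\<lambda>x::real^'n. (\<Sum>i\<in>UNIV. \<bar>x $ i\<bar> ^ p) powr (1 / real p))"
  proof (intro continuous_intros ballI)
    fix x :: "real^'n" assume "x \<in> -{0}"
    hence "pnorm p x > 0" using pnorm_pos that by auto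
    thus "(\<Sum>i\<in>UNIV. \<bar>x $ i\<bar> ^ p) \<noteq> 0" unfolding pnorm_def by auto
  qed
  thus ?thesis unfolding pnorm_def[abs_def] .
qed

lemma sgnpow: "p \<ge> 2 \<Longrightarrow> \<bar>t::real\<bar> ^ (p - 1) * sgn t = t * \<bar>t\<bar> ^ (p - 2)"
proof -
  assume "p \<ge> 2"
  then obtain q where q: "p = q + 2" by (metis add.commute le_Suc_ex)
  show ?thesis unfolding q by (cases "t > 0"; cases "t = 0") (auto simp: sgn_if)
qed

lemma cont_grad: assumes "p \<ge> 2" shows "continuous_on (-{0}) (gradf E s r p :: real^'n::finite \<Rightarrow> _)"
proof -
  have pp: "pnorm p x > 0" if "x \<in> -{0}" for x :: "real^'n" using that assms pnorm_pos[of x p] by auto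
  have cp: "continuous_on (-{0}) (pnorm p :: real^'n \<Rightarrow> real)" by (rule cont_pnorm) (use assms in linarith)
  have eq: "gradf E s r p = (\<lambda>x. (fact r / pnorm p x ^ r) *\<^sub>R
     (tensor_vec E s r x - (tensor_form E s r x * pnorm p x powr (- real p)) *\<^sub>R
        (\<chi> i. x $ i * \<bar>x $ i\<bar> ^ (p - 2))))"
    unfolding gradf_def[abs_def] using sgnpow[OF assms] by simp
  show ?thesis unfolding eq
    by (intro continuous_intros cont_tv cont_tf cp) (use pp in force)+
qed

lemma cont_f: assumes "p \<ge> 2" shows "continuous_on (-{0}) (fobj E s r p :: real^'n::finite \<Rightarrow> _)"
proof -
  have pp: "pnorm p x > 0" if "x \<in> -{0}" for x :: "real^'n" using that assms pnorm_pos[of x p] by auto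
  have cp: "continuous_on (-{0}) (pnorm p :: real^'n \<Rightarrow> real)" by (rule cont_pnorm) (use assms in linarith)
  show ?thesis unfolding fobj_def[abs_def]
    by (intro continuous_intros cont_tf cp) (use pp in force)+
qed

lemma R1:
  fixes \<tau> q w Y G a bt :: real
  assumes tp: "\<tau> > 0" and wb: "\<bar>w\<bar> \<le> Y * G" and "Y \<ge> 0" "G \<ge> 0" and q0: "q \<noteq> 0"
    and bt: "bt = (\<tau> * Y^2 * a / q - w) / q"
  shows "bt * a \<ge> -(G^2) / (4*\<tau>)"
proof -
  define t where "t = a / q"
  have e: "bt * a = \<tau> * Y^2 * t^2 - w * t" unfolding bt t_def using q0
    by (simp add: diff_divide_distrib power2_eq_square algebra_simps)
  have "w * t \<le> \<bar>w\<bar> * \<bar>t\<bar>" by (metis abs_ge_self abs_mult)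
  also have "\<dots> \<le> Y * G * \<bar>t\<bar>" using wb by (intro mult_right_mono) auto
  finally have wt: "w * t \<le> Y * G * \<bar>t\<bar>" .
  have sq: "(2*\<tau>*Y*\<bar>t\<bar> - G)^2 = 4*\<tau>*(\<tau> * Y^2 * t^2 - Y * G * \<bar>t\<bar>) + G^2"
    by (simp add: power2_eq_square algebra_simps abs_mult_self_eq)
  have "0 \<le> 4*\<tau>*(\<tau> * Y^2 * t^2 - Y * G * \<bar>t\<bar>) + G^2" using sq by (metis zero_le_power2)
  also have "\<dots> \<le> 4*\<tau>*(bt*a) + G^2" unfolding e using wt tp by (intro add_right_mono mult_left_mono) auto
  finally have "0 \<le> 4*\<tau>*(bt*a) + G^2" .
  hence "-(G^2) \<le> (bt*a) * (4*\<tau>)" by (simp add: algebra_simps)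
  moreover have "4*\<tau> > 0" using tp by simp
  ultimately show ?thesis using pos_divide_le_eq[of "4*\<tau>" "-(G^2)" "bt*a"] by blast
qed

lemma R2:
  fixes \<tau> \<epsilon> q w Y G a bt Dn :: real
  assumes tp: "\<tau> > 0" and ep: "\<epsilon> > 0" and wb: "\<bar>w\<bar> \<le> Y * G" and ab: "\<bar>a\<bar> \<le> Dn * G"
    and Y0: "Y \<ge> 0" and G0: "G \<ge> 0" and D0: "Dn \<ge> 0" and q0: "q \<noteq> 0"
    and h: "\<epsilon> * Dn * Y \<le> \<bar>q\<bar>"
    and bt: "bt = (\<tau> * Y^2 * a / q - w) / q"
  shows "\<bar>bt\<bar> * Dn \<le> (\<tau>/\<epsilon>^2 + 1/\<epsilon>) * G"
proof -
  define Q where "Q = \<bar>q\<bar>"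
  have Qp: "Q > 0" using q0 Q_def by simp
  define r0 where "r0 = Y * Dn / Q"
  have r00: "0 \<le> r0" unfolding r0_def using Y0 D0 Qp by simp
  have r01: "r0 \<le> 1/\<epsilon>"
  proof -
    have "Y * Dn \<le> Q / \<epsilon>" using h ep unfolding Q_def by (simp add: le_divide_eq algebra_simps)
    hence "Y * Dn / Q \<le> Q / \<epsilon> / Q" using Qp by (intro divide_right_mono) auto
    thus ?thesis using Qp unfolding r0_def by simp
  qed
  have "\<bar>\<tau> * Y^2 * a / q - w\<bar> \<le> \<bar>\<tau> * Y^2 * a / q\<bar> + \<bar>w\<bar>" by (rule abs_triangle_ineq4)
  also have "\<bar>\<tau> * Y^2 * a / q\<bar> = \<tau> * Y^2 * \<bar>a\<bar> / Q" using tp unfolding Q_def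
    by (simp add: abs_mult abs_divide)
  also have "\<tau> * Y^2 * \<bar>a\<bar> / Q + \<bar>w\<bar> \<le> \<tau> * Y^2 * (Dn * G) / Q + Y * G"
    using tp Qp ab wb by (intro add_mono divide_right_mono mult_left_mono) auto
  finally have n1: "\<bar>\<tau> * Y^2 * a / q - w\<bar> \<le> \<tau> * Y^2 * (Dn * G) / Q + Y * G" .
  have "\<bar>bt\<bar> * Dn = \<bar>\<tau> * Y^2 * a / q - w\<bar> * Dn / Q" unfolding bt Q_def by (simp add: abs_divide)
  also have "\<dots> \<le> (\<tau> * Y^2 * (Dn * G) / Q + Y * G) * Dn / Q"
    using n1 D0 Qp by (intro divide_right_mono mult_right_mono) auto
  also have "\<dots> = \<tau> * G * r0^2 + G * r0"
    unfolding r0_def using Qp by (simp add: power2_eq_square field_simps)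
  also have "\<dots> \<le> \<tau> * G * (1/\<epsilon>)^2 + G * (1/\<epsilon>)"
    using r00 r01 tp G0 by (intro add_mono mult_left_mono power_mono) auto
  also have "\<dots> = (\<tau>/\<epsilon>^2 + 1/\<epsilon>) * G" by (simp add: power2_eq_square algebra_simps)
  finally show ?thesis .
qed

lemma beta_props:
  fixes d y g :: "real ^ 'n::finite"
  assumes "\<tau> > 1/4" "\<epsilon> > 0"
  defines "pn \<equiv> g + csrh_beta \<tau> \<epsilon> d y g *\<^sub>R d"
  shows "g \<bullet> pn \<ge> (1 - 1/(4*\<tau>)) * (norm g)^2"
    "norm pn \<le> (1 + \<tau>/\<epsilon>^2 + 1/\<epsilon>) * norm g"
proof -
  have tp: "\<tau> > 0" using assms by simp
  define q where "q = d \<bullet> y"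
  define bt where "bt = (\<tau> * (norm y)^2 * (d \<bullet> g) / q - y \<bullet> g) / q"
  have bte: "(((\<tau> * (norm y)\<^sup>2 / (d \<bullet> y)) *\<^sub>R d - y) \<bullet> g) / (d \<bullet> y) = bt"
    unfolding bt_def q_def by (simp add: inner_diff_left)
  define c where "c = (\<bar>q\<bar> \<ge> \<epsilon> * norm d * norm y)"
  have beta: "csrh_beta \<tau> \<epsilon> d y g = max 0 (if c then bt else 0)"
    unfolding csrh_beta_def c_def q_def bte ..
  have wy: "\<bar>y \<bullet> g\<bar> \<le> norm y * norm g" by (rule Cauchy_Schwarz_ineq2)
  have wd: "\<bar>d \<bullet> g\<bar> \<le> norm d * norm g" by (rule Cauchy_Schwarz_ineq2)
  have ip: "g \<bullet> pn = (norm g)^2 + csrh_beta \<tau> \<epsilon> d y g * (d \<bullet> g)"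
    unfolding pn_def by (simp add: inner_add_right power2_norm_eq_inner inner_commute)
  have lb: "csrh_beta \<tau> \<epsilon> d y g * (d \<bullet> g) \<ge> -((norm g)^2) / (4*\<tau>)"
  proof (cases "c \<and> bt > 0 \<and> q \<noteq> 0")
    case True
    hence "csrh_beta \<tau> \<epsilon> d y g = bt" unfolding beta by simp
    thus ?thesis using R1[OF tp wy _ _ _ bt_def] True by simp
  next
    case False
    have "csrh_beta \<tau> \<epsilon> d y g = 0"
    proof (cases "q = 0")
      case True thus ?thesis unfolding beta bt_def by simp
    next
      case False2: False
      thus ?thesis unfolding beta using False by auto
    qed
    thus ?thesis using tp by (auto intro!: divide_nonneg_pos)
  qed
  have "1 - 1/(4*\<tau>) = 1 + (- 1/(4*\<tau>))" by simp
  then show "g \<bullet> pn \<ge> (1 - 1/(4*\<tau>)) * (norm g)^2" using lb unfolding ip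
    by (simp add: algebra_simps)
  have bb: "\<bar>csrh_beta \<tau> \<epsilon> d y g\<bar> * norm d \<le> (\<tau>/\<epsilon>^2 + 1/\<epsilon>) * norm g"
  proof (cases "c \<and> q \<noteq> 0")
    case True
    have "\<bar>csrh_beta \<tau> \<epsilon> d y g\<bar> \<le> \<bar>bt\<bar>" unfolding beta using True by auto
    hence "\<bar>csrh_beta \<tau> \<epsilon> d y g\<bar> * norm d \<le> \<bar>bt\<bar> * norm d" by (simp add: mult_right_mono)
    also have "\<dots> \<le> (\<tau>/\<epsilon>^2 + 1/\<epsilon>) * norm g"
      using True by (intro R2[OF tp assms(2) wy wd _ _ _ _ _ bt_def]) (auto simp: c_def)
    finally show ?thesis .
  next
    case False
    have "csrh_beta \<tau> \<epsilon> d y g = 0"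
    proof (cases "q = 0")
      case True thus ?thesis unfolding beta bt_def by simp
    next
      case False2: False
      thus ?thesis unfolding beta using False by auto
    qed
    thus ?thesis using tp assms(2) by simp
  qed
  have "norm pn \<le> norm g + \<bar>csrh_beta \<tau> \<epsilon> d y g\<bar> * norm d"
    unfolding pn_def by (metis norm_scaleR norm_triangle_ineq)
  thus "norm pn \<le> (1 + \<tau>/\<epsilon>^2 + 1/\<epsilon>) * norm g" using bb by (simp add: algebra_simps)
qed

theorem theorem4p1:
  fixes E :: "('n::finite) set set" and s :: "'n set \<Rightarrow> real" and r p :: nat
    and c1 c2 \<tau> \<epsilon> :: real
    and x :: "nat \<Rightarrow> real ^ 'n" and \<alpha> :: "nat \<Rightarrow> real" and pd :: "nat \<Rightarrow> real ^ 'n"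
  assumes "r \<ge> 2" and "p \<ge> 2"
    and "\<forall>e\<in>E. card e = r" and "\<forall>e\<in>E. s e > 0"
    and "0 < c1" and "c1 < c2" and "c2 < 1"
    and "1/4 < \<tau>" and "\<tau> < 1" and "\<epsilon> > 0"
    and "csrh_run E s r p c1 c2 \<tau> \<epsilon> x \<alpha> pd"
    and "\<forall>k. gradf E s r p (x k) \<noteq> 0"
  shows "(\<lambda>k. norm (gradf E s r p (x k))) \<longlonglongrightarrow> 0"
proof -
  note run = assms(11)[unfolded csrh_run_def]
  define g where "g = (\<lambda>k. gradf E s r p (x k))"
  define \<theta> where "\<theta> = 1 - 1/(4*\<tau>)"
  define M where "M = 1 + \<tau>/\<epsilon>^2 + 1/\<epsilon>"
  have tp: "\<tau> > 0" using assms(8) by simp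
  have \<theta>p: "\<theta> > 0" unfolding \<theta>_def using assms(8) by (simp add: field_simps)
  have \<theta>1: "\<theta> \<le> 1" unfolding \<theta>_def using tp by simp
  have M1: "M \<ge> 1" unfolding M_def using tp assms(10) by simp
  have c1p: "c1 > 0" and c2p: "1 - c2 > 0" using assms by auto
  have x0: "norm (x 0) = 1" and p0: "pd 0 = g 0" using run g_def by auto
  have ap: "\<And>k. \<alpha> k > 0" using run by blast
  have arm0: "\<And>k. fobj E s r p (x (Suc k)) \<ge> fobj E s r p (x k) + c1 * \<alpha> k * (g k \<bullet> pd k)"
    using run g_def by metis
  have wol0: "\<And>k. g (Suc k) \<bullet> pd k \<le> c2 * (g k \<bullet> pd k)"
    using run g_def by metis
  have xs: "\<And>k. x (Suc k) = csrh_step (x k) (pd k) (\<alpha> k)" using run by blast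
  have ps: "\<And>k. pd (Suc k) = g (Suc k) + csrh_beta \<tau> \<epsilon> (x (Suc k) - x k) (g (Suc k) - g k) (g (Suc k)) *\<^sub>R (x (Suc k) - x k)"
    using run g_def by metis
  have xS: "\<And>k. norm (x k) = 1"
  proof -
    fix k show "norm (x k) = 1"
      by (induction k) (use x0 xs step_props(1) in auto)
  qed
  have dxb: "\<And>k. norm (x (Suc k) - x k) \<le> \<alpha> k * norm (pd k)"
    using xs step_props(2)[OF xS] ap by (metis abs_of_pos)
  have asc: "\<And>k. g k \<bullet> pd k \<ge> \<theta> * (norm (g k))^2"
  proof -
    fix k show "g k \<bullet> pd k \<ge> \<theta> * (norm (g k))^2"
    proof (cases k)
      case 0
      have "\<theta> * (norm (g k))^2 \<le> 1 * (norm (g k))^2" using \<theta>1 by (intro mult_right_mono) auto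
      thus ?thesis using 0 p0 by (simp add: power2_norm_eq_inner)
    next
      case (Suc j)
      show ?thesis unfolding Suc ps \<theta>_def by (rule beta_props(1)[OF assms(8) assms(10)])
    qed
  qed
  have pb: "\<And>k. norm (pd k) \<le> M * norm (g k)"
  proof -
    fix k show "norm (pd k) \<le> M * norm (g k)"
    proof (cases k)
      case 0
      have "1 * norm (g k) \<le> M * norm (g k)" using M1 by (intro mult_right_mono) auto
      thus ?thesis using 0 p0 by simp
    next
      case (Suc j)
      show ?thesis unfolding Suc ps M_def by (rule beta_props(2)[OF assms(8) assms(10)])
    qed
  qed
  have wolfe: "\<And>k. (1 - c2) * (g k \<bullet> pd k) \<le> norm (g (Suc k) - g k) * norm (pd k)"
  proof -
    fix k
    have "(1 - c2) * (g k \<bullet> pd k) \<le> (g k - g (Suc k)) \<bullet> pd k"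
      using wol0[of k] by (simp add: inner_diff_left algebra_simps)
    also have "\<dots> \<le> norm (g k - g (Suc k)) * norm (pd k)" by (rule norm_cauchy_schwarz)
    also have "\<dots> = norm (g (Suc k) - g k) * norm (pd k)" by (simp add: norm_minus_commute)
    finally show "(1 - c2) * (g k \<bullet> pd k) \<le> norm (g (Suc k) - g k) * norm (pd k)" .
  qed
  define a where "a = (\<lambda>k. \<alpha> k * (norm (g k))^2)"
  have a0: "\<And>k. a k \<ge> 0" unfolding a_def using ap by (simp add: less_imp_le)
  have arm: "\<And>k. fobj E s r p (x (Suc k)) \<ge> fobj E s r p (x k) + c1 * \<theta> * a k"
  proof -
    fix k
    have "c1 * \<theta> * a k = (c1 * \<alpha> k) * (\<theta> * (norm (g k))^2)" unfolding a_def by simp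
    also have "\<dots> \<le> (c1 * \<alpha> k) * (g k \<bullet> pd k)"
      using asc[of k] c1p ap[of k] by (intro mult_left_mono) auto
    finally show "fobj E s r p (x (Suc k)) \<ge> fobj E s r p (x k) + c1 * \<theta> * a k"
      using arm0[of k] by simp
  qed
  have part: "\<And>n. fobj E s r p (x n) \<ge> fobj E s r p (x 0) + c1 * \<theta> * (\<Sum>k<n. a k)"
  proof -
    fix n show "fobj E s r p (x n) \<ge> fobj E s r p (x 0) + c1 * \<theta> * (\<Sum>k<n. a k)"
    proof (induction n)
      case 0 thus ?case by simp
    next
      case (Suc n) thus ?case using arm[of n] by (simp add: algebra_simps)
    qed
  qed
  have Ssub: "sphere (0::real^'n) 1 \<subseteq> -{0}" by auto
  have xinS: "\<And>k. x k \<in> sphere 0 1" using xS by simp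
  obtain B where B: "\<And>k. fobj E s r p (x k) \<le> B"
  proof -
    have "continuous_on (sphere 0 1) (fobj E s r p :: real^'n \<Rightarrow> real)"
      by (rule continuous_on_subset[OF cont_f[OF assms(2)] Ssub])
    hence "compact (fobj E s r p ` sphere (0::real^'n) 1)"
      by (intro compact_continuous_image compact_sphere)
    then obtain B where "\<forall>y\<in>fobj E s r p ` sphere (0::real^'n) 1. norm y \<le> B"
      using compact_imp_bounded bounded_iff by metis
    hence Bb: "\<And>k. norm (fobj E s r p (x k)) \<le> B" using xinS by blast
    have "\<And>k. fobj E s r p (x k) \<le> B"
    proof -
      fix k have "fobj E s r p (x k) \<le> norm (fobj E s r p (x k))" by simp
      thus "fobj E s r p (x k) \<le> B" using Bb[of k] by linarith
    qed
    thus ?thesis using that by blast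
  qed
  have "summable a"
  proof (rule summableI_nonneg_bounded[where x = "(B - fobj E s r p (x 0)) / (c1 * \<theta>)"])
    fix n
    show "0 \<le> a n" by (rule a0)
    have "c1 * \<theta> * (\<Sum>k<n. a k) \<le> B - fobj E s r p (x 0)" using part[of n] B[of n] by simp
    moreover have "c1 * \<theta> > 0" using c1p \<theta>p by simp
    ultimately show "sum a {..<n} \<le> (B - fobj E s r p (x 0)) / (c1 * \<theta>)"
      by (simp add: pos_le_divide_eq mult.commute)
  qed
  hence alim: "a \<longlonglongrightarrow> 0" by (rule summable_LIMSEQ_zero)
  have UC: "uniformly_continuous_on (sphere (0::real^'n) 1) (gradf E s r p)"
    by (intro compact_uniformly_continuous continuous_on_subset[OF cont_grad[OF assms(2)] Ssub] compact_sphere)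
  show ?thesis
  proof (rule LIMSEQ_I)
    fix e :: real assume ep: "e > 0"
    define e2 where "e2 = e * (1 - c2) * \<theta> / (2 * M)"
    have e2p: "e2 > 0" unfolding e2_def using ep c2p \<theta>p M1 by simp
    obtain \<eta> where \<eta>p: "\<eta> > 0" and \<eta>: "\<And>u v. u \<in> sphere 0 1 \<Longrightarrow> v \<in> sphere 0 1 \<Longrightarrow> dist v u < \<eta> \<Longrightarrow>
        dist (gradf E s r p v) (gradf E s r p u) < e2"
      using UC e2p unfolding uniformly_continuous_on_def by metis
    have "\<eta> * e / M > 0" using \<eta>p ep M1 by simp
    then obtain N where N: "\<And>k. k \<ge> N \<Longrightarrow> norm (a k - 0) < \<eta> * e / M"
      using LIMSEQ_D[OF alim] by metis
    have "\<forall>k\<ge>N. norm (g k) < e"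
    proof (intro allI impI)
      fix k assume kN: "k \<ge> N"
      show "norm (g k) < e"
      proof (rule ccontr)
        assume "\<not> norm (g k) < e"
        hence ge: "norm (g k) \<ge> e" by simp
        have ak: "a k < \<eta> * e / M" using N[OF kN] a0[of k] by simp
        have "norm (x (Suc k) - x k) \<le> \<alpha> k * (M * norm (g k))"
          using dxb[of k] pb[of k] ap[of k] by (meson less_imp_le mult_left_mono order_trans)
        also have "\<dots> \<le> \<alpha> k * (M * ((norm (g k))^2 / e))"
        proof -
          have "norm (g k) * e \<le> norm (g k) * norm (g k)" using ge by (intro mult_left_mono) auto
          hence "norm (g k) \<le> (norm (g k))^2 / e" using ep by (simp add: le_divide_eq power2_eq_square)
          thus ?thesis using ap[of k] M1 by (intro mult_left_mono) auto
        qed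
        also have "\<dots> = M * a k / e" unfolding a_def by (simp add: field_simps)
        also have "\<dots> < M * (\<eta> * e / M) / e" using ak M1 ep by (intro divide_strict_right_mono mult_strict_left_mono) auto
        also have "\<dots> = \<eta>" using M1 ep by simp
        finally have "dist (x (Suc k)) (x k) < \<eta>" by (simp add: dist_norm)
        hence dg: "norm (g (Suc k) - g k) < e2" using \<eta>[OF xinS xinS] unfolding g_def by (simp add: dist_norm)
        have "(1 - c2) * (\<theta> * (norm (g k))^2) \<le> (1 - c2) * (g k \<bullet> pd k)"
          using asc[of k] c2p by (intro mult_left_mono) auto
        also have "\<dots> \<le> norm (g (Suc k) - g k) * norm (pd k)" by (rule wolfe)
        also have "\<dots> \<le> e2 * (M * norm (g k))"
          using dg pb[of k] e2p by (intro mult_mono) auto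
        finally have ineq: "(1 - c2) * \<theta> * norm (g k) * norm (g k) \<le> (e2 * M) * norm (g k)"
          by (simp add: power2_eq_square algebra_simps)
        have gpos: "norm (g k) > 0" using ge ep by linarith
        have "(1 - c2) * \<theta> * norm (g k) \<le> e2 * M" using ineq gpos by simp
        also have "e2 * M = (1 - c2) * \<theta> * (e / 2)" unfolding e2_def using M1 by (simp add: field_simps)
        finally have "norm (g k) \<le> e / 2" using c2p \<theta>p by (simp add: mult_le_cancel_left_pos)
        thus False using ge ep by simp
      qed
    qed
    thus "\<exists>no. \<forall>n\<ge>no. norm (norm (gradf E s r p (x n)) - 0) < e" unfolding g_def by auto
  qed
qed

end
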